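(* Consider Dynamic A* (with \texttt{reeval} true or false) using a dyn-monotonic dynamic heuristic. Let $\langle s,\hat g,\hat h\rangle$ be an entry popped from Open at time $t_{\mathrm{pop}}$ (the start $\langle i,0\rangle$ of some iteration $i$). If $s\notin$ Closed at time $t_{\mathrm{pop}}$, then $\hat g+\hat h\le g^{t_{\mathrm{pop}}}(s)+h^{t_{\mathrm{pop}}}(s)$.
   Context: A transition system is $\mathcal T=\langle S,L,c,T,s_I,S_G\rangle$ with finite states $S$, finite labels $L$, cost function $c:L\to\mathbb R_{\ge0}$, transitions $T\subseteq S\times L\times S$, initial state $s_I$, goal states $S_G\subseteq S$. An information source $\sigma$ consists of a set $\mathcal I_\sigma$, $\iota_0^\sigma\in\mathcal I_\sigma$, $\mathrm{update}_\sigma:\mathcal I_\sigma\times T\to\mathcal I_\sigma$, $\mathrm{refine}_\sigma:\mathcal I_\sigma\times S\to\mathcal I_\sigma$. Reachable information: $\iota_n$ is reachable if obtained from $\iota_0^\sigma$ by a sequence of refine steps on states and update steps on transitions $e_1,\dots,e_n$, where each refined state and each origin of an updated transition is $s_I$ or the target of an earlier updated transition. A dynamic heuristic over $\sigma$ is $h:S\times\mathcal I_\sigma\to\mathbb R_{\ge0}\cup\{\infty\}$; it is dyn-monotonic if $h(s,\iota)\le h(s,\mathrm{update}_\sigma(\iota,t))$ and $h(s,\iota)\le h(s,\mathrm{refine}_\sigma(\iota,s'))$ for all reachable $\iota$, all $s,s'\in S$ and all $t\in T$. Parent source $\sigma_p$: $\mathcal I_{\sigma_p}$ = partial functions $S\rightharpoonup\mathbb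 R_{\ge0}\times(T\cup\{\bot\})$; $\iota_0=\{s_I\mapsto\langle0,\bot\rangle\}$; refine is the identity; $\mathrm{update}(\iota,\langle s,\ell,s'\rangle)$ with $\iota(s)=\langle g,\cdot\rangle$ changes only $s'$, setting it to $\langle g+c(\ell),\langle s,\ell,s'\rangle\rangle$ if $\iota(s')$ is undefined or has $g$-component $\ge g+c(\ell)$, otherwise unchanged. Dynamic A* takes $\mathcal T$, sources $\sigma_p,\sigma_h$, a dynamic heuristic $h$ over $\sigma_h$ and a Boolean flag \texttt{reeval}. Notation: at any moment $g(s)$ is the $g$-component of the current $\mathcal I(\sigma_p)(s)$ and $h(s)$ denotes $h(s,\mathcal I(\sigma_h))$ for the current $\mathcal I(\sigma_h)$. Open is a priority queue of entries $\langle s,g,h\rangle$ (duplicates allowed), popped by minimal stored value $g+h$ (ties arbitrary). Algorithm: 1. $\mathcal I(\sigma):=\iota_0^\sigma$ for both sources; $S_{\mathrm{known}}:=\{s_I\}$; Closed $:=\emptyset$; Open empty. If $h(s_I)<\infty$ insert $\langle s_I,g(s_I),h(s_I)\rangle$. 2. While Open is nonempty: pop an entry $\langle s,\hat g,\hat h\rangle$ of minimal $\hat g+\hat h$. If $s\in$ Closed, continue with the next iteration. Otherwise set $\mathcal I(\sigma):=\mathrm{refine}_\sigma(\mathcal I(\sigma),s)$ for both sources. If \texttt{reeval} is true and $\hat h<h(s)$: if $h(s)<\infty$ insert $\langle s,g(s),h(s)\rangle$; continue with the next iteration (this is a re-evaluation). Otherwise add $s$ to Closed ($s$ is expanded). If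 $s\in S_G$, return the path obtained by following the parent pointers of $\mathcal I(\sigma_p)$ from $s$ back to $s_I$. Otherwise, for each $t=\langle s,\ell,s'\rangle\in T$ in some order: let $old:=g(s')$ if $s'\in S_{\mathrm{known}}$ and undefined otherwise; set $\mathcal I(\sigma):=\mathrm{update}_\sigma(\mathcal I(\sigma),t)$ for both sources; add $s'$ to $S_{\mathrm{known}}$; if $h(s')=\infty$ skip $s'$; else if $old$ is undefined insert $\langle s',g(s'),h(s')\rangle$; else if $old>g(s')$, remove $s'$ from Closed if it is there (reopening) and insert $\langle s',g(s'),h(s')\rangle$. 3. Return "unsolvable". Times: the iterations of the while loop are numbered $i=1,2,\dots$ (iteration $i$ begins just before its pop); within iteration $i$ a step counter $j$ is $0$ at the start, becomes $1$ after the refine step, and increases by $1$ after each update step on a successor transition. Time $\langle i,j\rangle$ (time $\langle0,0\rangle$ is the initialization) is ordered lexicographically, and $g^{i,j}(s)$, $h^{i,j}(s)$ denote $g(s)$ and $h(s)$ with the information current at that time. *)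

theory Defs
  imports Complex_Main "HOL-Library.Multiset" "HOL-Library.Extended_Real"
begin

record ('s,'l) tsys =
  St :: "'s set"
  Lab :: "'l set"
  cost :: "'l \<Rightarrow> real"
  Tr :: "('s \<times> 'l \<times> 's) set"
  sI :: 's
  SG :: "'s set"

definition ts_wf :: "('s,'l) tsys \<Rightarrow> bool" where
  "ts_wf TS \<longleftrightarrow> finite (St TS) \<and> finite (Lab TS) \<and> (\<forall>l\<in>Lab TS. 0 \<le> cost TS l)
     \<and> Tr TS \<subseteq> St TS \<times> Lab TS \<times> St TS \<and> sI TS \<in> St TS \<and> SG TS \<subseteq> St TS"

text \<open>The set of information I_sigma is the type 'i.\<close>
record ('i,'s,'l) info_source =
  iota0 :: 'i
  upd :: "'i \<Rightarrow> ('s \<times> 'l \<times> 's) \<Rightarrow> 'i"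
  rfn :: "'i \<Rightarrow> 's \<Rightarrow> 'i"

text \<open>Reachable information, paired with the set of states that are s_I or targets
  of earlier updated transitions.\<close>
inductive_set reach_info :: "('s,'l) tsys \<Rightarrow> ('i,'s,'l) info_source \<Rightarrow> ('i \<times> 's set) set"
  for TS \<sigma> where
  init: "(iota0 \<sigma>, {sI TS}) \<in> reach_info TS \<sigma>"
| refine: "(\<iota>, K) \<in> reach_info TS \<sigma> \<Longrightarrow> s \<in> K \<Longrightarrow> (rfn \<sigma> \<iota> s, K) \<in> reach_info TS \<sigma>"
| update: "(\<iota>, K) \<in> reach_info TS \<sigma> \<Longrightarrow> (s, l, s') \<in> Tr TS \<Longrightarrow> s \<in> K \<Longrightarrow>
     (upd \<sigma> \<iota> (s, l, s'), insert s' K) \<in> reach_info TS \<sigma>"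

definition reachable_info :: "('s,'l) tsys \<Rightarrow> ('i,'s,'l) info_source \<Rightarrow> 'i \<Rightarrow> bool" where
  "reachable_info TS \<sigma> \<iota> \<longleftrightarrow> (\<exists>K. (\<iota>, K) \<in> reach_info TS \<sigma>)"

definition dyn_heuristic :: "('s \<Rightarrow> 'i \<Rightarrow> ereal) \<Rightarrow> bool" where
  "dyn_heuristic h \<longleftrightarrow> (\<forall>s \<iota>. 0 \<le> h s \<iota>)"

definition dyn_monotonic ::
  "('s,'l) tsys \<Rightarrow> ('i,'s,'l) info_source \<Rightarrow> ('s \<Rightarrow> 'i \<Rightarrow> ereal) \<Rightarrow> bool" where
  "dyn_monotonic TS \<sigma> h \<longleftrightarrow>
     (\<forall>\<iota>. reachable_info TS \<sigma> \<iota> \<longrightarrow>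
        (\<forall>s\<in>St TS. \<forall>t\<in>Tr TS. h s \<iota> \<le> h s (upd \<sigma> \<iota> t)) \<and>
        (\<forall>s\<in>St TS. \<forall>s'\<in>St TS. h s \<iota> \<le> h s (rfn \<sigma> \<iota> s')))"

type_synonym ('s,'l) pinfo = "'s \<Rightarrow> (real \<times> ('s \<times> 'l \<times> 's) option) option"

text \<open>None as second component encodes \<bottom>. If the origin has no entry (never happens
  in the algorithm) the update is the identity.\<close>
definition parent_upd :: "('l \<Rightarrow> real) \<Rightarrow> ('s,'l) pinfo \<Rightarrow> ('s \<times> 'l \<times> 's) \<Rightarrow> ('s,'l) pinfo" where
  "parent_upd c \<iota> t = (case t of (s, l, s') \<Rightarrow>
     (case \<iota> s of None \<Rightarrow> \<iota>
      | Some (g, _) \<Rightarrow>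
          (case \<iota> s' of None \<Rightarrow> \<iota>(s' \<mapsto> (g + c l, Some t))
           | Some (g', _) \<Rightarrow> if g + c l \<le> g' then \<iota>(s' \<mapsto> (g + c l, Some t)) else \<iota>)))"

definition parent_source :: "('s,'l) tsys \<Rightarrow> (('s,'l) pinfo, 's, 'l) info_source" where
  "parent_source TS = \<lparr>iota0 = [sI TS \<mapsto> (0, None)], upd = parent_upd (cost TS), rfn = (\<lambda>\<iota> s. \<iota>)\<rparr>"

definition gval :: "('s,'l) pinfo \<Rightarrow> 's \<Rightarrow> real" where
  "gval \<iota> s = fst (the (\<iota> s))"

type_synonym 's entry = "'s \<times> real \<times> ereal"

definition key :: "'s entry \<Rightarrow> ereal" where
  "key e = ereal (fst (snd e)) + snd (snd e)"

record ('i,'s,'l) config =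
  ip :: "('s,'l) pinfo"
  ih :: 'i
  known :: "'s set"
  closed :: "'s set"
  opn :: "'s entry multiset"

definition gcur :: "('i,'s,'l) config \<Rightarrow> 's \<Rightarrow> real" where
  "gcur C s = gval (ip C) s"

definition init_config ::
  "('s,'l) tsys \<Rightarrow> ('i,'s,'l) info_source \<Rightarrow> ('s \<Rightarrow> 'i \<Rightarrow> ereal) \<Rightarrow> ('i,'s,'l) config" where
  "init_config TS \<sigma>h h =
     \<lparr>ip = iota0 (parent_source TS), ih = iota0 \<sigma>h, known = {sI TS}, closed = {},
      opn = (if h (sI TS) (iota0 \<sigma>h) < \<infinity>
             then {# (sI TS, gval (iota0 (parent_source TS)) (sI TS), h (sI TS) (iota0 \<sigma>h)) #}
             else {#})\<rparr>"

definition succ_step ::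
  "('s,'l) tsys \<Rightarrow> ('i,'s,'l) info_source \<Rightarrow> ('s \<Rightarrow> 'i \<Rightarrow> ereal) \<Rightarrow>
   ('s \<times> 'l \<times> 's) \<Rightarrow> ('i,'s,'l) config \<Rightarrow> ('i,'s,'l) config" where
  "succ_step TS \<sigma>h h t C = (case t of (s, l, s') \<Rightarrow>
     let old = (if s' \<in> known C then map_option fst (ip C s') else None);
         ip' = upd (parent_source TS) (ip C) t;
         ih' = upd \<sigma>h (ih C) t;
         C1 = C\<lparr>ip := ip', ih := ih', known := insert s' (known C)\<rparr>;
         g' = gval ip' s';
         h' = h s' ih'
     in if h' = \<infinity> then C1
        else (case old of
                None \<Rightarrow> C1\<lparr>opn := add_mset (s', g', h') (opn C)\<rparr>
              | Some go \<Rightarrow> if g' < go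
                           then C1\<lparr>closed := closed C - {s'}, opn := add_mset (s', g', h') (opn C)\<rparr>
                           else C1))"

text \<open>One (non-terminating) iteration of the while loop: configuration at time <i,0>
  to configuration at time <i+1,0>. The popped entry is any entry of minimal key,
  successors are processed in an arbitrary order. An iteration that returns a
  solution has no successor configuration.\<close>
definition iter_step ::
  "('s,'l) tsys \<Rightarrow> ('i,'s,'l) info_source \<Rightarrow> ('s \<Rightarrow> 'i \<Rightarrow> ereal) \<Rightarrow> bool \<Rightarrow>
   ('i,'s,'l) config \<Rightarrow> ('i,'s,'l) config \<Rightarrow> bool" where
  "iter_step TS \<sigma>h h reeval C C' \<longleftrightarrow>
     (\<exists>e \<in># opn C. (\<forall>e' \<in># opn C. key e \<le> key e') \<and>
        (let s = fst e; O' = opn C - {#e#} in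
         if s \<in> closed C then C' = C\<lparr>opn := O'\<rparr>
         else
           (let ipr = rfn (parent_source TS) (ip C) s;
                ihr = rfn \<sigma>h (ih C) s;
                C1 = C\<lparr>ip := ipr, ih := ihr, opn := O'\<rparr>
            in if reeval \<and> snd (snd e) < h s ihr
               then C' = (if h s ihr < \<infinity> then C1\<lparr>opn := add_mset (s, gval ipr s, h s ihr) O'\<rparr> else C1)
               else s \<notin> SG TS \<and>
                    (\<exists>ts. distinct ts \<and> set ts = {t \<in> Tr TS. fst t = s} \<and>
                          C' = fold (succ_step TS \<sigma>h h) ts (C1\<lparr>closed := insert s (closed C)\<rparr>)))))"

end

theory Submission
  imports Defs
begin

definition ainv :: "('s,'l) tsys \<Rightarrow> ('i,'s,'l) info_source \<Rightarrow> ('s \<Rightarrow> 'i \<Rightarrow> ereal) \<Rightarrow> ('i,'s,'l) config \<Rightarrow> bool" where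
 "ainv TS \<sigma>h h C \<longleftrightarrow> known C \<subseteq> dom (ip C) \<and> (\<forall>e\<in>#opn C. fst e \<in> known C)
   \<and> (ih C, known C) \<in> reach_info TS \<sigma>h \<and> known C \<subseteq> St TS
   \<and> (\<forall>x\<in>known C. x \<notin> closed C \<longrightarrow> h x (ih C) < \<infinity> \<longrightarrow>
        (\<exists>g' h'. (x,g',h') \<in># opn C \<and> g' \<le> gcur C x \<and> h' \<le> h x (ih C)))"

lemma mono_upd:
  assumes "dyn_monotonic TS \<sigma> h" "(\<iota>,K) \<in> reach_info TS \<sigma>" "x \<in> St TS" "t \<in> Tr TS"
  shows "h x \<iota> \<le> h x (upd \<sigma> \<iota> t)"
  using assms unfolding dyn_monotonic_def reachable_info_def by blast

lemma mono_rfn: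
  assumes "dyn_monotonic TS \<sigma> h" "(\<iota>,K) \<in> reach_info TS \<sigma>" "x \<in> St TS" "y \<in> St TS"
  shows "h x \<iota> \<le> h x (rfn \<sigma> \<iota> y)"
  using assms unfolding dyn_monotonic_def reachable_info_def by blast

lemma pu_other: "x \<noteq> b \<Longrightarrow> parent_upd c \<iota> (a,l,b) x = \<iota> x"
  by (auto simp: parent_upd_def split: option.splits)

lemma pu_def: "\<iota> a \<noteq> None \<Longrightarrow> parent_upd c \<iota> (a,l,b) b \<noteq> None"
  by (auto simp: parent_upd_def split: option.splits)

lemma pu_le: "\<iota> b \<noteq> None \<Longrightarrow> gval (parent_upd c \<iota> (a,l,b)) b \<le> gval \<iota> b"
  by (auto simp: parent_upd_def gval_def split: option.splits)

lemma init_inv: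
  assumes "ts_wf TS"
  shows "ainv TS \<sigma>h h (init_config TS \<sigma>h h)"
  using assms unfolding ainv_def init_config_def
  by (auto simp: parent_source_def ts_wf_def gcur_def intro: reach_info.init)

lemma succ_inv:
  assumes wf: "ts_wf TS" and mon: "dyn_monotonic TS \<sigma>h h"
    and I: "ainv TS \<sigma>h h C" and t: "(a,l,b) \<in> Tr TS" and ak: "a \<in> known C"
  shows "ainv TS \<sigma>h h (succ_step TS \<sigma>h h (a,l,b) C) \<and> known C \<subseteq> known (succ_step TS \<sigma>h h (a,l,b) C)"
proof -
  define ip' where "ip' = parent_upd (cost TS) (ip C) (a,l,b)"
  define ih' where "ih' = upd \<sigma>h (ih C) (a,l,b)"
  define C1 where "C1 = C\<lparr>ip := ip', ih := ih', known := insert b (known C)\<rparr>"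
  define old where "old = (if b \<in> known C then map_option fst (ip C b) else None)"
  have bSt: "b \<in> St TS" using wf t by (auto simp: ts_wf_def)
  have I1: "known C \<subseteq> dom (ip C)" and I2: "\<forall>e\<in>#opn C. fst e \<in> known C"
    and I3: "(ih C, known C) \<in> reach_info TS \<sigma>h" and I5: "known C \<subseteq> St TS"
    and I4: "\<forall>x\<in>known C. x \<notin> closed C \<longrightarrow> h x (ih C) < \<infinity> \<longrightarrow>
        (\<exists>g' h'. (x,g',h') \<in># opn C \<and> g' \<le> gcur C x \<and> h' \<le> h x (ih C))"
    using I unfolding ainv_def by auto
  have R3: "(ih', insert b (known C)) \<in> reach_info TS \<sigma>h"
    unfolding ih'_def using reach_info.update[OF I3 t ak] .
  have hm: "\<And>x. x \<in> St TS \<Longrightarrow> h x (ih C) \<le> h x ih'"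
    unfolding ih'_def using mono_upd[OF mon I3 _ t] by blast
  have ipo: "\<And>x. x \<noteq> b \<Longrightarrow> ip' x = ip C x" unfolding ip'_def by (rule pu_other)
  have ipb: "ip' b \<noteq> None" proof -
    have "ip C a \<noteq> None" using ak I1 by auto
    then show ?thesis unfolding ip'_def by (rule pu_def)
  qed
  have gle: "b \<in> known C \<Longrightarrow> gval ip' b \<le> gval (ip C) b" proof -
    assume "b \<in> known C"
    then have "ip C b \<noteq> None" using I1 by auto
    then show ?thesis unfolding ip'_def by (rule pu_le)
  qed
  have oldv: "b \<in> known C \<Longrightarrow> old = Some (gval (ip C) b)"
    unfolding old_def gval_def using I1 by auto
  have SS: "succ_step TS \<sigma>h h (a,l,b) C = (if h b ih' = \<infinity> then C1
        else (case old of
                None \<Rightarrow> C1\<lparr>opn := add_mset (b, gval ip' b, h b ih') (opn C)\<rparr>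
              | Some go \<Rightarrow> if gval ip' b < go
                           then C1\<lparr>closed := closed C - {b}, opn := add_mset (b, gval ip' b, h b ih') (opn C)\<rparr>
                           else C1))"
    unfolding succ_step_def ip'_def ih'_def C1_def old_def by (simp add: Let_def parent_source_def)
  have gen: "ainv TS \<sigma>h h D"
    if D: "ip D = ip'" "ih D = ih'" "known D = insert b (known C)"
       "opn D = opn C + N" "closed C - {b} \<subseteq> closed D" "closed D \<subseteq> closed C"
       "\<forall>e\<in>#N. fst e = b"
       and Nb: "b \<notin> closed D \<Longrightarrow> h b ih' < \<infinity> \<Longrightarrow>
          (\<exists>g' h'. (b,g',h') \<in># opn D \<and> g' \<le> gval ip' b \<and> h' \<le> h b ih')"
    for D N
  proof -
    have "known D \<subseteq> dom (ip D)"
    proof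
      fix x assume "x \<in> known D" then show "x \<in> dom (ip D)" using D I1 ipo ipb by (cases "x = b") auto
    qed
    moreover have "\<forall>e\<in>#opn D. fst e \<in> known D" using D I2 by auto
    moreover have "(ih D, known D) \<in> reach_info TS \<sigma>h" using D R3 by simp
    moreover have "known D \<subseteq> St TS" using D I5 bSt by auto
    moreover have "\<forall>x\<in>known D. x \<notin> closed D \<longrightarrow> h x (ih D) < \<infinity> \<longrightarrow>
        (\<exists>g' h'. (x,g',h') \<in># opn D \<and> g' \<le> gcur D x \<and> h' \<le> h x (ih D))"
    proof (intro ballI impI)
      fix x assume xk: "x \<in> known D" and xc: "x \<notin> closed D" and xh: "h x (ih D) < \<infinity>"
      show "\<exists>g' h'. (x,g',h') \<in># opn D \<and> g' \<le> gcur D x \<and> h' \<le> h x (ih D)"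
      proof (cases "x = b")
        case True then show ?thesis using Nb xc xh D by (auto simp: gcur_def)
      next
        case False
        with xk D have xk': "x \<in> known C" by auto
        have xS: "x \<in> St TS" using xk' I5 by auto
        have "x \<notin> closed C" using xc D False by auto
        moreover have "h x (ih C) < \<infinity>" using hm[OF xS] xh D by auto
        ultimately obtain g' h'' where w: "(x,g',h'') \<in># opn C" "g' \<le> gcur C x" "h'' \<le> h x (ih C)"
          using I4 xk' by blast
        have "gcur D x = gcur C x" using D ipo False by (simp add: gcur_def gval_def)
        then show ?thesis using w D hm[OF xS] by (intro exI[of _ g'] exI[of _ h'']) (auto intro: order_trans)
      qed
    qed
    ultimately show ?thesis unfolding ainv_def by blast
  qed
  show ?thesis
  proof (cases "h b ih' = \<infinity>")
    case True
    have "ainv TS \<sigma>h h C1" by (rule gen[where N="{#}"]) (auto simp: C1_def True)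
    then show ?thesis using SS True by (auto simp: C1_def)
  next
    case hf: False
    show ?thesis
    proof (cases old)
      case None
      have bk: "b \<notin> known C" using None oldv by auto
      let ?D = "C1\<lparr>opn := add_mset (b, gval ip' b, h b ih') (opn C)\<rparr>"
      have "ainv TS \<sigma>h h ?D" by (rule gen[where N="{#(b, gval ip' b, h b ih')#}"]) (auto simp: C1_def)
      then show ?thesis using SS hf None by (auto simp: C1_def)
    next
      case (Some go)
      have bk: "b \<in> known C" using Some old_def by (auto split: if_splits)
      have go: "go = gval (ip C) b" using Some oldv[OF bk] by simp
      show ?thesis
      proof (cases "gval ip' b < go")
        case True
        let ?D = "C1\<lparr>closed := closed C - {b}, opn := add_mset (b, gval ip' b, h b ih') (opn C)\<rparr>"
        have "ainv TS \<sigma>h h ?D" by (rule gen[where N="{#(b, gval ip' b, h b ih')#}"]) (auto simp: C1_def)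
        then show ?thesis using SS hf Some True by (auto simp: C1_def)
      next
        case False
        have geq: "gval ip' b = gval (ip C) b" using False go gle[OF bk] by simp
        have bS: "b \<in> St TS" by (rule bSt)
        have "ainv TS \<sigma>h h C1"
        proof (rule gen[where N="{#}"])
          assume "b \<notin> closed C1" "h b ih' < \<infinity>"
          then have "b \<notin> closed C" by (simp add: C1_def)
          moreover have "h b (ih C) < \<infinity>" using hm[OF bS] \<open>h b ih' < \<infinity>\<close> by auto
          ultimately obtain g' h'' where w: "(b,g',h'') \<in># opn C" "g' \<le> gcur C b" "h'' \<le> h b (ih C)"
            using I4 bk by blast
          then show "\<exists>g' h'. (b,g',h') \<in># opn C1 \<and> g' \<le> gval ip' b \<and> h' \<le> h b ih'"
            using geq hm[OF bS] by (intro exI[of _ g'] exI[of _ h'']) (auto simp: C1_def gcur_def intro: order_trans)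
        qed (auto simp: C1_def)
        then show ?thesis using SS hf Some False by (auto simp: C1_def)
      qed
    qed
  qed
qed

lemma fold_inv:
  assumes wf: "ts_wf TS" and mon: "dyn_monotonic TS \<sigma>h h"
  shows "ainv TS \<sigma>h h D \<Longrightarrow> s \<in> known D \<Longrightarrow> (\<forall>t\<in>set ts. t \<in> Tr TS \<and> fst t = s)
     \<Longrightarrow> ainv TS \<sigma>h h (fold (succ_step TS \<sigma>h h) ts D)"
proof (induction ts arbitrary: D)
  case Nil then show ?case by simp
next
  case (Cons t ts)
  obtain a l b where tt: "t = (a,l,b)" by (cases t) auto
  have "ainv TS \<sigma>h h (succ_step TS \<sigma>h h t D) \<and> known D \<subseteq> known (succ_step TS \<sigma>h h t D)"
    using succ_inv[OF wf mon Cons.prems(1), of a l b] Cons.prems tt by auto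
  then show ?case using Cons by auto
qed

lemma iter_inv:
  assumes wf: "ts_wf TS" and mon: "dyn_monotonic TS \<sigma>h h"
    and I: "ainv TS \<sigma>h h C" and st: "iter_step TS \<sigma>h h reeval C C'"
  shows "ainv TS \<sigma>h h C'"
proof -
  have I1: "known C \<subseteq> dom (ip C)" and I2: "\<forall>e\<in>#opn C. fst e \<in> known C"
    and I3: "(ih C, known C) \<in> reach_info TS \<sigma>h" and I5: "known C \<subseteq> St TS"
    and I4: "\<forall>x\<in>known C. x \<notin> closed C \<longrightarrow> h x (ih C) < \<infinity> \<longrightarrow>
        (\<exists>g' h'. (x,g',h') \<in># opn C \<and> g' \<le> gcur C x \<and> h' \<le> h x (ih C))"
    using I unfolding ainv_def by auto
  obtain e where e: "e \<in># opn C" and rest: "(let s = fst e; O' = opn C - {#e#} in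
         if s \<in> closed C then C' = C\<lparr>opn := O'\<rparr>
         else
           (let ipr = rfn (parent_source TS) (ip C) s;
                ihr = rfn \<sigma>h (ih C) s;
                C1 = C\<lparr>ip := ipr, ih := ihr, opn := O'\<rparr>
            in if reeval \<and> snd (snd e) < h s ihr
               then C' = (if h s ihr < \<infinity> then C1\<lparr>opn := add_mset (s, gval ipr s, h s ihr) O'\<rparr> else C1)
               else s \<notin> SG TS \<and>
                    (\<exists>ts. distinct ts \<and> set ts = {t \<in> Tr TS. fst t = s} \<and>
                          C' = fold (succ_step TS \<sigma>h h) ts (C1\<lparr>closed := insert s (closed C)\<rparr>))))"
    using st unfolding iter_step_def by blast
  define s where "s = fst e"
  define O' where "O' = opn C - {#e#}"
  have sk: "s \<in> known C" using I2 e s_def by auto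
  have sS: "s \<in> St TS" using sk I5 by auto
  have O'sub: "\<And>x. x \<in># O' \<Longrightarrow> x \<in># opn C" unfolding O'_def by (meson in_diffD)
  have keep: "\<And>x g h'. (x,g,h') \<in># opn C \<Longrightarrow> x \<noteq> s \<Longrightarrow> (x,g,h') \<in># O'"
    proof -
    fix x g h' assume a: "(x,g,h') \<in># opn C" "x \<noteq> s"
    then have "(x,g,h') \<noteq> e" unfolding s_def by auto
    then show "(x,g,h') \<in># O'" using a(1) unfolding O'_def
      by (simp add: in_diff_count)
  qed
  have rfp: "rfn (parent_source TS) (ip C) s = ip C" by (simp add: parent_source_def)
  show ?thesis
  proof (cases "s \<in> closed C")
    case True
    then have C': "C' = C\<lparr>opn := O'\<rparr>" using rest by (simp add: s_def O'_def Let_def)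
    show ?thesis unfolding ainv_def C'
    proof (intro conjI)
      show "\<forall>x\<in>known (C\<lparr>opn := O'\<rparr>). x \<notin> closed (C\<lparr>opn := O'\<rparr>) \<longrightarrow> h x (ih (C\<lparr>opn := O'\<rparr>)) < \<infinity> \<longrightarrow>
        (\<exists>g' h'. (x,g',h') \<in># opn (C\<lparr>opn := O'\<rparr>) \<and> g' \<le> gcur (C\<lparr>opn := O'\<rparr>) x \<and> h' \<le> h x (ih (C\<lparr>opn := O'\<rparr>)))"
        using I4 keep True by (fastforce simp: gcur_def)
    qed (use I1 I2 I3 I5 O'sub in auto)
  next
    case nc: False
    define ihr where "ihr = rfn \<sigma>h (ih C) s"
    define C1 where "C1 = C\<lparr>ip := ip C, ih := ihr, opn := O'\<rparr>"
    have R: "(ihr, known C) \<in> reach_info TS \<sigma>h" unfolding ihr_def using reach_info.refine[OF I3 sk] .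
    have hm: "\<And>x. x \<in> St TS \<Longrightarrow> h x (ih C) \<le> h x ihr" unfolding ihr_def using mono_rfn[OF mon I3 _ sS] by blast
    have rest2: "if reeval \<and> snd (snd e) < h s ihr
               then C' = (if h s ihr < \<infinity> then C1\<lparr>opn := add_mset (s, gval (ip C) s, h s ihr) O'\<rparr> else C1)
               else s \<notin> SG TS \<and>
                    (\<exists>ts. distinct ts \<and> set ts = {t \<in> Tr TS. fst t = s} \<and>
                          C' = fold (succ_step TS \<sigma>h h) ts (C1\<lparr>closed := insert s (closed C)\<rparr>))"
      using rest nc unfolding ihr_def C1_def s_def O'_def
      by (simp add: Let_def parent_source_def)
    have oldw: "\<And>x. x \<in> known C \<Longrightarrow> x \<notin> closed C \<Longrightarrow> x \<noteq> s \<Longrightarrow> h x ihr < \<infinity> \<Longrightarrow>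
        (\<exists>g' h'. (x,g',h') \<in># O' \<and> g' \<le> gcur C x \<and> h' \<le> h x ihr)"
    proof -
      fix x assume a: "x \<in> known C" "x \<notin> closed C" "x \<noteq> s" "h x ihr < \<infinity>"
      have xS: "x \<in> St TS" using a I5 by auto
      have "h x (ih C) < \<infinity>" using hm[OF xS] a by auto
      then obtain g' h' where "(x,g',h') \<in># opn C" "g' \<le> gcur C x" "h' \<le> h x (ih C)" using I4 a by blast
      then show "\<exists>g' h'. (x,g',h') \<in># O' \<and> g' \<le> gcur C x \<and> h' \<le> h x ihr"
        using keep a hm[OF xS] by (meson order_trans)
    qed
    show ?thesis
    proof (cases "reeval \<and> snd (snd e) < h s ihr")
      case True
      then have C': "C' = (if h s ihr < \<infinity> then C1\<lparr>opn := add_mset (s, gval (ip C) s, h s ihr) O'\<rparr> else C1)"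
        using rest2 by simp
      show ?thesis unfolding ainv_def C'
        using I1 I2 I5 R O'sub oldw sk nc
        by (auto simp: C1_def gcur_def) (metis order_refl)+
    next
      case False
      then obtain ts where ts: "set ts = {t \<in> Tr TS. fst t = s}"
        and C': "C' = fold (succ_step TS \<sigma>h h) ts (C1\<lparr>closed := insert s (closed C)\<rparr>)"
        using rest2 by auto
      have "ainv TS \<sigma>h h (C1\<lparr>closed := insert s (closed C)\<rparr>)"
        unfolding ainv_def using I1 I2 I5 R O'sub oldw
        by (auto simp: C1_def gcur_def)
      then show ?thesis unfolding C' using fold_inv[OF wf mon] ts sk by (simp add: C1_def)
    qed
  qed
qed

lemma reach_inv:
  assumes wf: "ts_wf TS" and mon: "dyn_monotonic TS \<sigma>h h"
    and r: "(iter_step TS \<sigma>h h reeval)\<^sup>*\<^sup>* (init_config TS \<sigma>h h) C"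
  shows "ainv TS \<sigma>h h C"
  using r
proof (induction rule: rtranclp_induct)
  case base then show ?case using init_inv[OF wf] .
next
  case (step y z) then show ?case using iter_inv[OF wf mon] by blast
qed

theorem lemma4:
  fixes TS :: "('s,'l) tsys" and \<sigma>h :: "('i,'s,'l) info_source"
    and h :: "'s \<Rightarrow> 'i \<Rightarrow> ereal" and reeval :: bool
    and C :: "('i,'s,'l) config" and s :: 's and gh :: real and hh :: ereal
  assumes "ts_wf TS"
    and "dyn_heuristic h"
    and "dyn_monotonic TS \<sigma>h h"
    and "(iter_step TS \<sigma>h h reeval)\<^sup>*\<^sup>* (init_config TS \<sigma>h h) C"
    and "(s, gh, hh) \<in># opn C"
    and "\<forall>e \<in># opn C. key (s, gh, hh) \<le> key e"
    and "s \<notin> closed C"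
  shows "key (s, gh, hh) \<le> ereal (gcur C s) + h s (ih C)"
proof (cases "h s (ih C) = \<infinity>")
  case True then show ?thesis by simp
next
  case False
  have I: "ainv TS \<sigma>h h C" using reach_inv assms by blast
  have sk: "s \<in> known C" using I assms(5) unfolding ainv_def by force
  obtain g' h' where w: "(s,g',h') \<in># opn C" "g' \<le> gcur C s" "h' \<le> h s (ih C)"
    using I sk assms(7) False unfolding ainv_def by (metis less_ereal.simps(4) ereal_less_PInfty neq_iff top_ereal_def)
  have "key (s, gh, hh) \<le> key (s,g',h')" using assms(6) w by blast
  also have "\<dots> = ereal g' + h'" by (simp add: key_def)
  also have "\<dots> \<le> ereal (gcur C s) + h s (ih C)" using w by (intro add_mono) auto
  finally show ?thesis .
qed

end
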